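(* Let $s\ge2$. For all positive integers $z\le z'$ (with $z$ large), $$\sum_{\substack{\omega\sim\omega'\\ \omega\in\Omega_z,\ \omega'\in\Omega_{z'}}}P(E_\omega\cap E_{\omega'})\ll z^{-1/s}\log z,$$ where the implied constant depends only on $s$.
   Context: Let $A\subseteq\{1,2,\dots\}$ be a random set in which the events $\{n\in A\}$ are mutually independent with $P(n\in A)=\frac1s n^{-1+1/s}$. For a finite set $\omega$ of distinct positive integers, $E_\omega$ is the event $\{\omega\subseteq A\}$. For $\omega=\{x_1,\dots,x_r\}$ define $\sigma(\omega)=\{a_1x_1+\cdots+a_rx_r: a_1+\cdots+a_r=s,\ a_i\ge1 \text{ integers}\}$, and for an integer $z$ let $\Omega_z=\{\omega: z\in\sigma(\omega)\}$. We write $\omega\sim\omega'$ if $\omega\cap\omega'\neq\emptyset$ and $\omega\neq\omega'$. *)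

theory Defs
  imports "HOL-Probability.Probability"
begin

definition pr_in :: "nat \<Rightarrow> nat \<Rightarrow> real" where
  "pr_in s n = (1 / real s) * real n powr (-1 + 1 / real s)"

text \<open>The random set A, encoded by its indicator A :: nat => bool; the events
  (n in A) are independent Bernoulli(pr_in s n).\<close>
definition rand_set :: "nat \<Rightarrow> (nat \<Rightarrow> bool) measure" where
  "rand_set s = (\<Pi>\<^sub>M n\<in>UNIV. measure_pmf (bernoulli_pmf (pr_in s n)))"

definition E_ev :: "nat \<Rightarrow> nat set \<Rightarrow> (nat \<Rightarrow> bool) set" where
  "E_ev s \<omega> = {A \<in> space (rand_set s). \<forall>n\<in>\<omega>. A n}"

definition sigma_set :: "nat \<Rightarrow> nat set \<Rightarrow> nat set" where
  "sigma_set s \<omega> = {(\<Sum>x\<in>\<omega>. a x * x) | a. (\<forall>x\<in>\<omega>. a x \<ge> 1) \<and> (\<Sum>x\<in>\<omega>. a x) = s}"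

definition Omega :: "nat \<Rightarrow> nat \<Rightarrow> nat set set" where
  "Omega s z = {\<omega>. finite \<omega> \<and> 0 \<notin> \<omega> \<and> z \<in> sigma_set s \<omega>}"

definition rel_sim :: "nat set \<Rightarrow> nat set \<Rightarrow> bool" where
  "rel_sim \<omega> \<omega>' \<longleftrightarrow> \<omega> \<inter> \<omega>' \<noteq> {} \<and> \<omega> \<noteq> \<omega>'"

end

theory Submission
  imports Defs "HOL-Analysis.Harmonic_Numbers"
begin


lemma pow_step:
  fixes \<beta> y :: real
  assumes "0 < \<beta>" "\<beta> \<le> 1" "1 \<le> y"
  shows "\<beta> * y powr (\<beta> - 1) \<le> y powr \<beta> - (y - 1) powr \<beta>"
proof (cases "y = 1")
  case True then show ?thesis using assms by simp
next
  case False
  hence y1: "y > 1" using assms by simp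
  have "((y-1)/y) powr \<beta> * 1 powr (1-\<beta>) \<le> \<beta> * ((y-1)/y) + (1-\<beta>) * 1"
    using assms y1 by (intro Youngs_inequality_0) auto
  hence "(y-1) powr \<beta> / y powr \<beta> \<le> 1 - \<beta> / y"
    using y1 by (simp add: powr_divide field_simps)
  hence "(y-1) powr \<beta> \<le> y powr \<beta> * (1 - \<beta> / y)"
    using y1 by (simp add: divide_le_eq mult.commute)
  also have "\<dots> = y powr \<beta> - \<beta> * (y powr \<beta> / y)" using y1 by (simp add: algebra_simps)
  also have "y powr \<beta> / y = y powr (\<beta> - 1)" using y1 by (simp add: powr_diff)
  finally show ?thesis by simp
qed

lemma power_sum_bound:
  fixes \<beta> :: real
  assumes "0 < \<beta>" "\<beta> \<le> 1"
  shows "(\<Sum>y=1..n. real y powr (\<beta> - 1)) \<le> real n powr \<beta> / \<beta>"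
proof (induction n)
  case 0 then show ?case by simp
next
  case (Suc n)
  have "(\<Sum>y=1..Suc n. real y powr (\<beta> - 1)) = (\<Sum>y=1..n. real y powr (\<beta> - 1)) + real (Suc n) powr (\<beta> - 1)"
    by simp
  also have "\<dots> \<le> real n powr \<beta> / \<beta> + (real (Suc n) powr \<beta> - real n powr \<beta>) / \<beta>"
    using Suc pow_step[OF assms, of "real (Suc n)"] assms
    by (intro add_mono) (auto simp: field_simps)
  also have "\<dots> = real (Suc n) powr \<beta> / \<beta>" by (simp add: diff_divide_distrib)
  finally show ?case .
qed

lemma harm_bound: "n \<ge> 1 \<Longrightarrow> (harm n :: real) \<le> 1 + ln (real n)"
  using euler_mascheroni_sequence_decreasing[of 1 n] by (simp add: harm_def)

lemma log_sum_bound: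
  fixes \<gamma> :: real
  assumes "0 \<le> \<gamma>" "n \<ge> 1"
  shows "(\<Sum>j=1..n. real j powr (-\<gamma>)) \<le> (1 + ln (real n)) * (1 + real n powr (1 - \<gamma>))"
proof -
  have "(\<Sum>j=1..n. real j powr (-\<gamma>)) \<le> (\<Sum>j=1..n. (1 / real j) * (1 + real n powr (1 - \<gamma>)))"
  proof (intro sum_mono)
    fix j assume j: "j \<in> {1..n}"
    have e: "real j powr (-\<gamma>) = (1 / real j) * real j powr (1 - \<gamma>)"
      using j by (simp add: powr_diff powr_minus field_simps)
    have "real j powr (1 - \<gamma>) \<le> 1 + real n powr (1 - \<gamma>)"
    proof (cases "1 - \<gamma> \<ge> 0")
      case True
      then have "real j powr (1 - \<gamma>) \<le> real n powr (1 - \<gamma>)" using j by (intro powr_mono2) auto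
      then show ?thesis by simp
    next
      case False
      then have "real j powr (1 - \<gamma>) \<le> 1" using j powr_mono[of "1 - \<gamma>" 0 "real j"] by auto
      moreover have "0 \<le> real n powr (1 - \<gamma>)" by simp
      ultimately show ?thesis by linarith
    qed
    then show "real j powr (-\<gamma>) \<le> (1 / real j) * (1 + real n powr (1 - \<gamma>))"
      using j e by (auto intro!: divide_right_mono)
  qed
  also have "\<dots> = harm n * (1 + real n powr (1 - \<gamma>))"
    by (simp add: harm_def sum_distrib_right atLeast1_atMost_eq_remove0 inverse_eq_divide)
  also have "\<dots> \<le> (1 + ln (real n)) * (1 + real n powr (1 - \<gamma>))"
    using harm_bound[OF assms(2)] by (intro mult_right_mono) auto
  finally show ?thesis .
qed

lemma half_powr_le:
  fixes w x :: real and e :: real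
  assumes "e \<le> 0" "-1 \<le> e" "0 < w" "w / 2 \<le> x"
  shows "x powr e \<le> 2 * w powr e"
proof -
  have "x powr e \<le> (w/2) powr e" using assms by (intro powr_mono2') auto
  also have "\<dots> = w powr e * 2 powr (-e)" using assms by (simp add: powr_divide powr_minus field_simps)
  also have "2 powr (-e) \<le> 2 powr 1" using assms by (intro powr_mono) auto
  hence "w powr e * 2 powr (-e) \<le> w powr e * 2" by (intro mult_left_mono) auto
  finally show ?thesis by simp
qed

lemma rev_sum_nat:
  fixes f :: "nat \<Rightarrow> real"
  shows "(\<Sum>y\<in>{1..<w}. f (w - y)) = (\<Sum>y\<in>{1..<w}. f y)"
  by (rule sum.reindex_bij_witness[where i="\<lambda>y. w - y" and j="\<lambda>y. w - y"]) auto

lemma beta_sum_bound: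
  fixes \<beta> \<gamma> :: real
  assumes b: "0 < \<beta>" "\<beta> \<le> 1" and c: "0 < \<gamma>" "\<gamma> \<le> 1" and w: "w \<ge> 1"
  shows "(\<Sum>y\<in>{1..<w}. real y powr (\<beta> - 1) * real (w - y) powr (\<gamma> - 1))
          \<le> 2 * (1/\<beta> + 1/\<gamma>) * real w powr (\<beta> + \<gamma> - 1)"
proof -
  have "(\<Sum>y\<in>{1..<w}. real y powr (\<beta> - 1) * real (w - y) powr (\<gamma> - 1))
     \<le> (\<Sum>y\<in>{1..<w}. 2 * real w powr (\<gamma> - 1) * real y powr (\<beta> - 1)
                      + 2 * real w powr (\<beta> - 1) * real (w - y) powr (\<gamma> - 1))"
  proof (intro sum_mono)
    fix y assume y: "y \<in> {1..<w}"
    show "real y powr (\<beta> - 1) * real (w - y) powr (\<gamma> - 1)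
        \<le> 2 * real w powr (\<gamma> - 1) * real y powr (\<beta> - 1) + 2 * real w powr (\<beta> - 1) * real (w - y) powr (\<gamma> - 1)"
    proof (cases "2 * y \<le> w")
      case True
      hence "real (w - y) powr (\<gamma> - 1) \<le> 2 * real w powr (\<gamma> - 1)"
        using y c by (intro half_powr_le) (auto simp: of_nat_diff)
      hence "real y powr (\<beta> - 1) * real (w - y) powr (\<gamma> - 1) \<le> real y powr (\<beta> - 1) * (2 * real w powr (\<gamma> - 1))"
        by (intro mult_left_mono) auto
      hence "real y powr (\<beta> - 1) * real (w - y) powr (\<gamma> - 1) \<le> 2 * real w powr (\<gamma> - 1) * real y powr (\<beta> - 1)"
        by (simp add: mult_ac)
      moreover have "0 \<le> 2 * real w powr (\<beta> - 1) * real (w - y) powr (\<gamma> - 1)" by simp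
      ultimately show ?thesis by linarith
    next
      case False
      hence "real y powr (\<beta> - 1) \<le> 2 * real w powr (\<beta> - 1)"
        using y b by (intro half_powr_le) auto
      hence "real y powr (\<beta> - 1) * real (w - y) powr (\<gamma> - 1) \<le> (2 * real w powr (\<beta> - 1)) * real (w - y) powr (\<gamma> - 1)"
        by (intro mult_right_mono) auto
      moreover have "0 \<le> 2 * real w powr (\<gamma> - 1) * real y powr (\<beta> - 1)" by simp
      ultimately show ?thesis by linarith
    qed
  qed
  also have "\<dots> = 2 * real w powr (\<gamma> - 1) * (\<Sum>y\<in>{1..<w}. real y powr (\<beta> - 1))
               + 2 * real w powr (\<beta> - 1) * (\<Sum>y\<in>{1..<w}. real y powr (\<gamma> - 1))"
  proof -
    have r: "(\<Sum>y\<in>{1..<w}. real (w - y) powr (\<gamma> - 1)) = (\<Sum>y\<in>{1..<w}. real y powr (\<gamma> - 1))"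
      by (rule sum.reindex_bij_witness[where i="\<lambda>y. w - y" and j="\<lambda>y. w - y"]) auto
    show ?thesis by (simp only: sum.distrib r flip: sum_distrib_left)
  qed
  also have "\<dots> \<le> 2 * real w powr (\<gamma> - 1) * (real w powr \<beta> / \<beta>) + 2 * real w powr (\<beta> - 1) * (real w powr \<gamma> / \<gamma>)"
  proof -
    have s: "(\<Sum>y\<in>{1..<w}. real y powr (e - 1)) \<le> real w powr e / e" if "0 < e" "e \<le> 1" for e
    proof -
      have "(\<Sum>y\<in>{1..<w}. real y powr (e - 1)) \<le> (\<Sum>y=1..w. real y powr (e - 1))"
        by (intro sum_mono2) auto
      also have "\<dots> \<le> real w powr e / e" using power_sum_bound[OF that] .
      finally show ?thesis .
    qed
    show ?thesis using s[OF b] s[OF c] by (intro add_mono mult_left_mono) auto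
  qed
  also have "\<dots> = 2 * (1/\<beta> + 1/\<gamma>) * real w powr (\<beta> + \<gamma> - 1)"
    using w by (simp add: field_simps powr_add[symmetric] powr_diff)
  finally show ?thesis .
qed

definition LL :: "nat \<Rightarrow> nat \<Rightarrow> nat list set" where
  "LL n N = {L. set L \<subseteq> {1..N} \<and> length L = n}"

fun dotp :: "nat list \<Rightarrow> nat list \<Rightarrow> nat" where
  "dotp (c#cs) (x#xs) = c*x + dotp cs xs"
| "dotp _ _ = 0"

definition pl :: "nat \<Rightarrow> nat list \<Rightarrow> real" where
  "pl s L = prod_list (map (pr_in s) L)"

definition V :: "nat \<Rightarrow> nat \<Rightarrow> nat list \<Rightarrow> nat \<Rightarrow> real" where
  "V s N cs w = (\<Sum>L\<in>LL (length cs) N. if dotp cs L = w then pl s L else 0)"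

lemma finite_LL[simp]: "finite (LL n N)"
proof -
  have "LL n N \<subseteq> {L. set L \<subseteq> {1..N} \<and> length L = n}" by (simp add: LL_def)
  then show ?thesis unfolding LL_def using finite_lists_length_eq[of "{1..N}" n] by simp
qed

lemma LL_0[simp]: "LL 0 N = {[]}" by (auto simp: LL_def)

lemma LL_Suc: "LL (Suc n) N = (\<lambda>(x,L). x#L) ` ({1..N} \<times> LL n N)"
proof -
  have "L \<in> (\<lambda>(x,L). x#L) ` ({1..N} \<times> LL n N)" if "L \<in> LL (Suc n) N" for L
  proof -
    from that obtain x L' where "L = x # L'" by (cases L) (auto simp: LL_def)
    with that show ?thesis by (auto simp: LL_def image_iff)
  qed
  then show ?thesis by (auto simp: LL_def)
qed

lemma sum_LL_Suc:
  fixes f :: "nat list \<Rightarrow> real"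
  shows "(\<Sum>L\<in>LL (Suc n) N. f L) = (\<Sum>x\<in>{1..N}. \<Sum>L\<in>LL n N. f (x#L))"
proof -
  have inj: "inj_on (\<lambda>(x,L). x#L) ({1..N} \<times> LL n N)" by (auto simp: inj_on_def)
  have "(\<Sum>L\<in>LL (Suc n) N. f L) = (\<Sum>p\<in>{1..N} \<times> LL n N. f ((\<lambda>(x,L). x#L) p))"
    unfolding LL_Suc by (rule sum.reindex[OF inj, unfolded comp_def])
  also have "\<dots> = (\<Sum>x\<in>{1..N}. \<Sum>L\<in>LL n N. f (x#L))"
    by (subst sum.cartesian_product) (simp add: case_prod_beta)
  finally show ?thesis .
qed

lemma pr_in_nonneg[simp]: "0 \<le> pr_in s n" by (simp add: pr_in_def)

lemma pl_nonneg[simp]: "0 \<le> pl s L"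
  by (induction L) (auto simp: pl_def)

lemma pl_Cons[simp]: "pl s (x#L) = pr_in s x * pl s L" by (simp add: pl_def)

lemma V_nonneg[simp]: "0 \<le> V s N cs w" by (simp add: V_def sum_nonneg)

lemma V_Nil: "V s N [] w = (if w = 0 then 1 else 0)"
  by (simp add: V_def pl_def)

lemma V_Cons: "V s N (c#cs) w = (\<Sum>x\<in>{1..N}. pr_in s x * (if c*x \<le> w then V s N cs (w - c*x) else 0))"
proof -
  have "V s N (c#cs) w = (\<Sum>x\<in>{1..N}. \<Sum>L\<in>LL (length cs) N. if c*x + dotp cs L = w then pr_in s x * pl s L else 0)"
    unfolding V_def length_Cons sum_LL_Suc by (intro sum.cong refl) (simp add: pl_def)
  also have "\<dots> = (\<Sum>x\<in>{1..N}. pr_in s x * (if c*x \<le> w then V s N cs (w - c*x) else 0))"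
    unfolding V_def by (intro sum.cong refl) (auto simp: sum_distrib_left intro!: sum.cong)
  finally show ?thesis .
qed


lemma V_zero:
  assumes "cs \<noteq> []" "set cs \<subseteq> {1..}"
  shows "V s N cs 0 = 0"
proof -
  obtain c cs' where cs: "cs = c # cs'" using assms by (cases cs) auto
  show ?thesis unfolding cs V_Cons using assms cs by (auto intro!: sum.neutral)
qed

lemma pr_in_le:
  assumes s: "s \<ge> 1" and c: "1 \<le> c" "c \<le> s" and x: "x \<ge> 1"
  shows "pr_in s x \<le> real (c*x) powr (1 / real s - 1)"
proof -
  have "real c powr (-1) \<le> real c powr (1 / real s - 1)"
    using c s by (intro powr_mono) auto
  moreover have "real c powr (-1) = 1 / real c" using c by (simp add: powr_minus divide_inverse)
  moreover have "1 / real s \<le> 1 / real c" using c by (intro divide_left_mono) auto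
  ultimately have "1 / real s \<le> real c powr (1 / real s - 1)" by linarith
  hence "1 / real s * real x powr (1 / real s - 1) \<le> real c powr (1 / real s - 1) * real x powr (1 / real s - 1)"
    by (intro mult_right_mono) auto
  also have "\<dots> = real (c*x) powr (1 / real s - 1)" by (simp add: powr_mult)
  finally show ?thesis by (simp add: pr_in_def)
qed

lemma reindex_mult_sum:
  fixes g :: "nat \<Rightarrow> real"
  assumes c: "c \<ge> 1" and g: "\<And>y. 0 \<le> g y"
  shows "(\<Sum>x\<in>{1..N}. if c*x < w then g (c*x) else 0) \<le> (\<Sum>y\<in>{1..<w}. g y)"
proof -
  have "(\<Sum>x\<in>{1..N}. if c*x < w then g (c*x) else 0) = (\<Sum>x\<in>{x\<in>{1..N}. c*x < w}. g (c*x))"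
    by (rule sum.inter_filter[symmetric]) simp
  also have "\<dots> = (\<Sum>y\<in>(\<lambda>x. c*x) ` {x\<in>{1..N}. c*x < w}. g y)"
    using c by (subst sum.reindex) (auto simp: inj_on_def)
  also have "\<dots> \<le> (\<Sum>y\<in>{1..<w}. g y)"
  proof (intro sum_mono2)
    show "(\<lambda>x. c*x) ` {x\<in>{1..N}. c*x < w} \<subseteq> {1..<w}"
      using c by auto
  qed (use g in auto)
  finally show ?thesis .
qed

lemma V_bound:
  assumes s: "s \<ge> 2" and cs: "set cs \<subseteq> {1..s}" "cs \<noteq> []" "length cs \<le> s" and w: "w \<ge> 1"
  shows "V s N cs w \<le> (4 * real s) ^ length cs * real w powr (real (length cs) / real s - 1)"
  using cs w
proof (induction cs arbitrary: w)
  case Nil then show ?case by simp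
next
  case (Cons c cs')
  have c: "1 \<le> c" "c \<le> s" using Cons.prems by auto
  show ?case
  proof (cases "cs' = []")
    case True
    have "V s N [c] w \<le> (\<Sum>x\<in>{1..N}. if x = w div c then real w powr (1 / real s - 1) else 0)"
    proof (unfold V_Cons, intro sum_mono)
      fix x assume x: "x \<in> {1..N}"
      show "pr_in s x * (if c * x \<le> w then V s N [] (w - c * x) else 0)
            \<le> (if x = w div c then real w powr (1 / real s - 1) else 0)"
      proof (cases "c * x = w")
        case True
        then have "x = w div c" using c by auto
        moreover have "pr_in s x \<le> real (c*x) powr (1 / real s - 1)"
          using pr_in_le[of s c x] s c x by auto
        hence "pr_in s x \<le> real w powr (1 / real s - 1)" by (simp only: True)
        ultimately show ?thesis using True by (simp add: V_Nil)
      next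
        case False
        then have "pr_in s x * (if c * x \<le> w then V s N [] (w - c * x) else 0) = 0" by (auto simp: V_Nil)
        moreover have "0 \<le> (if x = w div c then real w powr (1 / real s - 1) else 0)" by simp
        ultimately show ?thesis by linarith
      qed
    qed
    also have "\<dots> \<le> real w powr (1 / real s - 1)" by (simp add: sum.delta')
    also have "\<dots> \<le> (4 * real s) ^ 1 * real w powr (1 / real s - 1)"
      using s mult_right_mono[of 1 "4 * real s" "real w powr (1 / real s - 1)"] by simp
    finally show ?thesis using True by simp
  next
    case False
    define n where "n = length cs'"
    have n: "1 \<le> n" "n + 1 \<le> s" using False Cons.prems by (auto simp: n_def Suc_le_eq)
    define C where "C = (4 * real s) ^ n"
    have C: "0 \<le> C" by (simp add: C_def)
    have IH: "V s N cs' v \<le> C * real v powr (real n / real s - 1)" if "v \<ge> 1" for v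
      using Cons.IH[of v] Cons.prems that False by (auto simp: C_def n_def)
    define g where "g y = real y powr (1 / real s - 1) * real (w - y) powr (real n / real s - 1)" for y
    have "V s N (c#cs') w \<le> (\<Sum>x\<in>{1..N}. if c*x < w then C * g (c*x) else 0)"
    proof (unfold V_Cons, intro sum_mono)
      fix x assume x: "x \<in> {1..N}"
      show "pr_in s x * (if c * x \<le> w then V s N cs' (w - c * x) else 0) \<le> (if c*x < w then C * g (c*x) else 0)"
      proof (cases "c * x < w")
        case True
        have "pr_in s x * V s N cs' (w - c * x) \<le> real (c*x) powr (1 / real s - 1) * (C * real (w - c*x) powr (real n / real s - 1))"
          using pr_in_le[of s c x] s c x IH[of "w - c*x"] True by (intro mult_mono) auto
        then show ?thesis using True by (simp add: g_def mult_ac)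
      next
        case False
        have "set cs' \<subseteq> {1..}" using Cons.prems by auto
        then have "V s N cs' 0 = 0" using V_zero[of cs' s N] \<open>cs' \<noteq> []\<close> by auto
        then show ?thesis using False by (cases "c*x = w") auto
      qed
    qed
    also have "\<dots> = C * (\<Sum>x\<in>{1..N}. if c*x < w then g (c*x) else 0)"
      by (simp add: sum_distrib_left if_distrib cong: if_cong)
    also have "\<dots> \<le> C * (\<Sum>y\<in>{1..<w}. g y)"
      using c C by (intro mult_left_mono reindex_mult_sum) (auto simp: g_def)
    also have "(\<Sum>y\<in>{1..<w}. g y) \<le> 2 * (1 / (1 / real s) + 1 / (real n / real s)) * real w powr (1 / real s + real n / real s - 1)"
      unfolding g_def using s n Cons.prems by (intro beta_sum_bound) auto
    also have "2 * (1 / (1 / real s) + 1 / (real n / real s)) \<le> 4 * real s"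
    proof -
      have "real s / real n \<le> real s" using n s by (simp add: divide_le_eq)
      then show ?thesis by simp
    qed
    finally have "V s N (c#cs') w \<le> C * (4 * real s * real w powr (1 / real s + real n / real s - 1))"
      using C by (simp add: mult_left_mono mult_right_mono)
    then show ?thesis by (simp add: C_def n_def add_divide_distrib algebra_simps)
  qed
qed

lemma V_uniform:
  assumes s: "s \<ge> 2" and cs: "set cs \<subseteq> {1..s}" "length cs \<le> s"
  shows "V s N cs w \<le> (4 * real s) ^ s"
proof (cases "cs = []")
  case True
  have "1 \<le> (4 * real s) ^ s" using s by (intro one_le_power) auto
  then show ?thesis using True by (simp add: V_Nil)
next
  case False
  show ?thesis
  proof (cases "w = 0")
    case True
    have "set cs \<subseteq> {1..}" using cs by auto
    then show ?thesis using V_zero[of cs s N] False True by simp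
  next
    case w: False
    have "V s N cs w \<le> (4 * real s) ^ length cs * real w powr (real (length cs) / real s - 1)"
      using V_bound[OF s cs(1) False cs(2)] w by auto
    also have "real w powr (real (length cs) / real s - 1) \<le> 1"
      using w cs s powr_mono[of "real (length cs) / real s - 1" 0 "real w"] by (auto simp: divide_le_eq)
    hence "(4 * real s) ^ length cs * real w powr (real (length cs) / real s - 1) \<le> (4 * real s) ^ length cs"
      by (intro mult_left_le) auto
    also have "\<dots> \<le> (4 * real s) ^ s" using s cs by (intro power_increasing) auto
    finally show ?thesis .
  qed
qed

lemma V_append:
  "V s N (xs @ ys) w = (\<Sum>L\<in>LL (length xs) N. pl s L * (if dotp xs L \<le> w then V s N ys (w - dotp xs L) else 0))"
proof (induction xs arbitrary: w)
  case Nil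
  then show ?case by (simp add: pl_def)
next
  case (Cons c xs)
  have "V s N ((c # xs) @ ys) w = (\<Sum>x\<in>{1..N}. pr_in s x * (if c*x \<le> w then V s N (xs @ ys) (w - c*x) else 0))"
    by (simp add: V_Cons)
  also have "\<dots> = (\<Sum>x\<in>{1..N}. \<Sum>L\<in>LL (length xs) N. pl s (x#L) * (if dotp (c#xs) (x#L) \<le> w then V s N ys (w - dotp (c#xs) (x#L)) else 0))"
    by (intro sum.cong refl) (auto simp: Cons.IH sum_distrib_left diff_diff_add intro!: sum.cong)
  also have "\<dots> = (\<Sum>L\<in>LL (length (c#xs)) N. pl s L * (if dotp (c#xs) L \<le> w then V s N ys (w - dotp (c#xs) L) else 0))"
    unfolding length_Cons sum_LL_Suc ..
  finally show ?case .
qed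

lemma V_sum_K:
  fixes G :: "nat \<Rightarrow> real"
  shows "(\<Sum>L\<in>LL (length cs) N. pl s L * (if dotp cs L < z then G (dotp cs L) else 0)) = (\<Sum>m<z. V s N cs m * G m)"
proof -
  have "(\<Sum>m<z. V s N cs m * G m) = (\<Sum>m<z. \<Sum>L\<in>LL (length cs) N. if dotp cs L = m then pl s L * G m else 0)"
    unfolding V_def sum_distrib_right by (intro sum.cong refl) auto
  also have "\<dots> = (\<Sum>L\<in>LL (length cs) N. \<Sum>m<z. if dotp cs L = m then pl s L * G m else 0)"
    by (rule sum.swap)
  also have "\<dots> = (\<Sum>L\<in>LL (length cs) N. pl s L * (if dotp cs L < z then G (dotp cs L) else 0))"
    by (intro sum.cong refl) (simp add: sum.delta eq_commute[of "dotp cs _"])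
  finally show ?thesis ..
qed

lemma half_powr_le2:
  fixes w x :: real and e :: real
  assumes "e \<le> 0" "-2 \<le> e" "0 < w" "w / 2 \<le> x"
  shows "x powr e \<le> 4 * w powr e"
proof -
  have "x powr e \<le> (w/2) powr e" using assms by (intro powr_mono2') auto
  also have "\<dots> = w powr e * 2 powr (-e)" using assms by (simp add: powr_divide powr_minus field_simps)
  also have "2 powr (-e) \<le> 2 powr 2" using assms by (intro powr_mono) auto
  hence "w powr e * 2 powr (-e) \<le> w powr e * 4" by (intro mult_left_mono) auto
  finally show ?thesis by simp
qed

lemma exp_le_target:
  assumes "1 \<le> z" "e \<le> -1 / real s"
  shows "real z powr e \<le> real z powr (-1 / real s)"
  using assms by (intro powr_mono) auto

lemma caseC_sum:
  assumes s: "s \<ge> 2" and kr: "k \<ge> 1" "r \<ge> 1" "k + r = s" and z: "z \<ge> 1"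
  shows "(\<Sum>m\<in>{1..<z}. real m powr (real k / real s - 1) * real (z - m) powr (2 * (real r / real s - 1)))
          \<le> 16 * (1 + ln (real z)) * real z powr (-1 / real s)"
proof -
  define \<beta> where "\<beta> = real r / real s"
  have ks: "real k = real s - real r" using kr by auto
  have kb: "real k / real s - 1 = - \<beta>" using s by (simp add: \<beta>_def ks diff_divide_distrib)
  have b1: "1 / real s \<le> \<beta>" using kr s by (simp add: \<beta>_def divide_right_mono)
  have b2: "\<beta> \<le> 1 - 1 / real s"
  proof -
    have "real r \<le> real s - 1" using kr by simp
    then show ?thesis using s by (simp add: \<beta>_def field_simps)
  qed
  have bpos: "0 \<le> \<beta>" by (simp add: \<beta>_def)
  have b3: "\<beta> \<le> 1" using b2 s by (smt (verit) divide_nonneg_nonneg of_nat_0_le_iff)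
  define e where "e = 2 * (\<beta> - 1)"
  have "(\<Sum>m\<in>{1..<z}. real m powr (real k / real s - 1) * real (z - m) powr (2 * (real r / real s - 1)))
      = (\<Sum>m\<in>{1..<z}. real m powr (-\<beta>) * real (z - m) powr e)"
    by (simp add: kb e_def \<beta>_def)
  also have "\<dots> \<le> (\<Sum>m\<in>{1..<z}. 4 * real z powr e * real m powr (-\<beta>) + 4 * real z powr (-\<beta>) * real (z - m) powr e)"
  proof (intro sum_mono)
    fix m assume m: "m \<in> {1..<z}"
    show "real m powr (-\<beta>) * real (z - m) powr e \<le> 4 * real z powr e * real m powr (-\<beta>) + 4 * real z powr (-\<beta>) * real (z - m) powr e"
    proof (cases "2 * m \<le> z")
      case True
      hence "real (z - m) powr e \<le> 4 * real z powr e"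
        using m b3 bpos by (intro half_powr_le2) (auto simp: of_nat_diff e_def)
      hence "real m powr (-\<beta>) * real (z - m) powr e \<le> real m powr (-\<beta>) * (4 * real z powr e)"
        by (intro mult_left_mono) auto
      hence "real m powr (-\<beta>) * real (z - m) powr e \<le> 4 * real z powr e * real m powr (-\<beta>)"
        by (simp add: mult_ac)
      moreover have "0 \<le> 4 * real z powr (-\<beta>) * real (z - m) powr e" by simp
      ultimately show ?thesis by linarith
    next
      case False
      hence "real m powr (-\<beta>) \<le> 4 * real z powr (-\<beta>)"
        using m b3 bpos by (intro half_powr_le2) auto
      hence "real m powr (-\<beta>) * real (z - m) powr e \<le> (4 * real z powr (-\<beta>)) * real (z - m) powr e"
        by (intro mult_right_mono) auto
      moreover have "0 \<le> 4 * real z powr e * real m powr (-\<beta>)" by simp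
      ultimately show ?thesis by linarith
    qed
  qed
  also have "\<dots> = 4 * real z powr e * (\<Sum>m\<in>{1..<z}. real m powr (-\<beta>))
               + 4 * real z powr (-\<beta>) * (\<Sum>m\<in>{1..<z}. real m powr (-(2 - 2*\<beta>)))"
  proof -
    have r: "(\<Sum>m\<in>{1..<z}. real (z - m) powr e) = (\<Sum>m\<in>{1..<z}. real m powr e)"
      by (rule sum.reindex_bij_witness[where i="\<lambda>y. z - y" and j="\<lambda>y. z - y"]) auto
    have e2: "-(2 - 2*\<beta>) = e" by (simp add: e_def)
    show ?thesis unfolding e2 by (simp only: sum.distrib r flip: sum_distrib_left)
  qed
  also have "\<dots> \<le> 4 * real z powr e * ((1 + ln (real z)) * (1 + real z powr (1 - \<beta>)))
               + 4 * real z powr (-\<beta>) * ((1 + ln (real z)) * (1 + real z powr (1 - (2 - 2*\<beta>))))"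
  proof -
    have s1: "(\<Sum>m\<in>{1..<z}. real m powr (-g)) \<le> (1 + ln (real z)) * (1 + real z powr (1 - g))" if "0 \<le> g" for g
    proof -
      have "(\<Sum>m\<in>{1..<z}. real m powr (-g)) \<le> (\<Sum>m=1..z. real m powr (-g))"
        by (intro sum_mono2) auto
      also have "\<dots> \<le> (1 + ln (real z)) * (1 + real z powr (1 - g))" by (rule log_sum_bound[OF that z])
      finally show ?thesis .
    qed
    show ?thesis using s1[of \<beta>] s1[of "2 - 2*\<beta>"] bpos b3 by (intro add_mono mult_left_mono) auto
  qed
  also have "\<dots> = 4 * (1 + ln (real z)) * (real z powr e + real z powr (e + (1 - \<beta>)) + real z powr (-\<beta>) + real z powr (-\<beta> + (1 - (2 - 2*\<beta>))))"
  proof -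
    have p1: "real z powr e * real z powr (1-\<beta>) = real z powr (e + (1-\<beta>))" by (rule powr_add[symmetric])
    have p2: "real z powr (-\<beta>) * real z powr (1 - (2-2*\<beta>)) = real z powr (-\<beta> + (1-(2-2*\<beta>)))"
      by (rule powr_add[symmetric])
    show ?thesis unfolding p1[symmetric] p2[symmetric] by (simp add: algebra_simps)
  qed
  also have "\<dots> \<le> 4 * (1 + ln (real z)) * (4 * real z powr (-1 / real s))"
  proof -
    have "real z powr e \<le> real z powr (-1 / real s)"
      using z b2 b3 by (intro exp_le_target) (auto simp: e_def)
    moreover have "real z powr (e + (1 - \<beta>)) \<le> real z powr (-1 / real s)"
      using z b2 b3 by (intro exp_le_target) (auto simp: e_def)
    moreover have "real z powr (-\<beta>) \<le> real z powr (-1 / real s)"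
      using z b1 by (intro exp_le_target) auto
    moreover have "real z powr (-\<beta> + (1 - (2 - 2*\<beta>))) \<le> real z powr (-1 / real s)"
      using z b2 b3 by (intro exp_le_target) auto
    moreover have "0 \<le> 1 + ln (real z)" using z by simp
    ultimately show ?thesis by (intro mult_left_mono) auto
  qed
  finally show ?thesis by (simp add: algebra_simps)
qed

definition SQ :: "nat \<Rightarrow> nat \<Rightarrow> nat \<Rightarrow> nat \<Rightarrow> nat list \<Rightarrow> nat list \<Rightarrow> nat list \<Rightarrow> nat list \<Rightarrow> real" where
  "SQ s N z z' aK aI cK cJ = (\<Sum>LK\<in>LL (length aK) N. \<Sum>LI\<in>LL (length aI) N. \<Sum>LJ\<in>LL (length cJ) N.
     if dotp aK LK + dotp aI LI = z \<and> dotp cK LK + dotp cJ LJ = z' then pl s LK * pl s LI * pl s LJ else 0)"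

lemma V_shift:
  "(\<Sum>L\<in>LL (length cs) N. if d + dotp cs L = z then pl s L else 0) = (if d \<le> z then V s N cs (z - d) else 0)"
  unfolding V_def by (auto intro!: sum.cong sum.neutral)

lemma SQ_eq:
  "SQ s N z z' aK aI cK cJ = (\<Sum>LK\<in>LL (length aK) N. pl s LK *
      (if dotp aK LK \<le> z then V s N aI (z - dotp aK LK) else 0) *
      (if dotp cK LK \<le> z' then V s N cJ (z' - dotp cK LK) else 0))"
  unfolding SQ_def
proof (intro sum.cong refl)
  fix LK
  have "(\<Sum>LI\<in>LL (length aI) N. \<Sum>LJ\<in>LL (length cJ) N.
          if dotp aK LK + dotp aI LI = z \<and> dotp cK LK + dotp cJ LJ = z' then pl s LK * pl s LI * pl s LJ else 0)
      = (\<Sum>LI\<in>LL (length aI) N. \<Sum>LJ\<in>LL (length cJ) N.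
          pl s LK * ((if dotp aK LK + dotp aI LI = z then pl s LI else 0) * (if dotp cK LK + dotp cJ LJ = z' then pl s LJ else 0)))"
    by (intro sum.cong refl) auto
  also have "\<dots> = pl s LK * ((\<Sum>LI\<in>LL (length aI) N. if dotp aK LK + dotp aI LI = z then pl s LI else 0) *
                  (\<Sum>LJ\<in>LL (length cJ) N. if dotp cK LK + dotp cJ LJ = z' then pl s LJ else 0))"
    unfolding sum_product by (simp only: sum_distrib_left)
  also have "\<dots> = pl s LK * (if dotp aK LK \<le> z then V s N aI (z - dotp aK LK) else 0) *
      (if dotp cK LK \<le> z' then V s N cJ (z' - dotp cK LK) else 0)"
    by (simp add: V_shift)
  finally show "(\<Sum>LI\<in>LL (length aI) N. \<Sum>LJ\<in>LL (length cJ) N.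
          if dotp aK LK + dotp aI LI = z \<and> dotp cK LK + dotp cJ LJ = z' then pl s LK * pl s LI * pl s LJ else 0)
      = pl s LK * (if dotp aK LK \<le> z then V s N aI (z - dotp aK LK) else 0) *
      (if dotp cK LK \<le> z' then V s N cJ (z' - dotp cK LK) else 0)" .
qed

lemma length_le_sum_list: "set xs \<subseteq> {1..} \<Longrightarrow> length xs \<le> sum_list xs"
  by (induction xs) (auto simp: Suc_le_eq)

lemma sum_list_eq_length: "set xs \<subseteq> {1..} \<Longrightarrow> sum_list xs = length xs \<Longrightarrow> xs = replicate (length xs) 1"
proof (induction xs)
  case Nil then show ?case by simp
next
  case (Cons x xs)
  have "length xs \<le> sum_list xs" using Cons.prems by (intro length_le_sum_list) auto
  then have "x = 1" "sum_list xs = length xs" using Cons.prems by auto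
  then show ?case using Cons by auto
qed

lemma V_bound':
  assumes s: "s \<ge> 2" and cs: "set cs \<subseteq> {1..s}" "cs \<noteq> []" "length cs \<le> s" and w: "w \<ge> 1"
  shows "V s N cs w \<le> (4 * real s) ^ s * real w powr (real (length cs) / real s - 1)"
proof -
  have "V s N cs w \<le> (4 * real s) ^ length cs * real w powr (real (length cs) / real s - 1)"
    by (rule V_bound[OF assms])
  also have "\<dots> \<le> (4 * real s) ^ s * real w powr (real (length cs) / real s - 1)"
    using s cs by (intro mult_right_mono power_increasing) auto
  finally show ?thesis .
qed

lemma frac_le:
  assumes "real a \<le> real s - 1" "s \<ge> 1"
  shows "real a / real s - 1 \<le> -1 / real s"
proof -
  have "real a / real s \<le> (real s - 1) / real s" using assms by (intro divide_right_mono) auto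
  then show ?thesis using assms by (simp add: diff_divide_distrib)
qed

lemma final_arith:
  fixes B t l :: real
  assumes "1 \<le> B" "1 \<le> l" "0 \<le> t"
  shows "B * (B * t) \<le> 32 * B^3 * t * l"
proof -
  have "B * B \<le> 32 * B^3" using assms by (simp add: power3_eq_cube)
  then have "B * B * t \<le> 32 * B^3 * t" using assms by (intro mult_right_mono) auto
  also have "\<dots> \<le> 32 * B^3 * t * l"
  proof -
    have "0 \<le> 32 * B^3 * t * (l - 1)" using assms by simp
    then show ?thesis by (simp add: algebra_simps)
  qed
  finally show ?thesis by (simp add: mult.assoc)
qed

lemma SQ_bound:
  assumes s: "s \<ge> 2"
    and sets: "set aK \<subseteq> {1..s}" "set aI \<subseteq> {1..s}" "set cK \<subseteq> {1..s}" "set cJ \<subseteq> {1..s}"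
    and len: "length cK = length aK" "aK \<noteq> []" "aI \<noteq> [] \<or> cJ \<noteq> []"
    and sums: "sum_list aK + sum_list aI = s" "sum_list cK + sum_list cJ = s"
    and z: "3 \<le> z" "z \<le> z'"
  shows "SQ s N z z' aK aI cK cJ \<le> (32 * (4 * real s) ^ (3 * s)) * real z powr (-1 / real s) * ln (real z)"
proof -
  define B where "B = (4 * real s) ^ s"
  have B1: "1 \<le> B" unfolding B_def using s by (intro one_le_power) auto
  have K0: "32 * (4 * real s) ^ (3 * s) = 32 * B^3" unfolding B_def by (simp only: power_mult mult.commute[of 3 s])
  have lnz: "1 \<le> ln (real z)"
  proof -
    have "exp 1 \<le> (3::real)" using exp_le by simp
    also have "\<dots> \<le> real z" using z by simp
    finally show ?thesis using ln_ge_iff[of "real z" 1] z by simp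
  qed
  define k where "k = length aK"
  define i where "i = length aI"
  define j where "j = length cJ"
  have k1: "k \<ge> 1" using len by (simp add: k_def Suc_le_eq)
  have "k \<le> sum_list aK" "i \<le> sum_list aI" "k \<le> sum_list cK" "j \<le> sum_list cJ"
  proof -
    have sub: "set xs \<subseteq> {1..s} \<Longrightarrow> set xs \<subseteq> {1..}" for xs :: "nat list" by auto
    show "k \<le> sum_list aK" "i \<le> sum_list aI" "k \<le> sum_list cK" "j \<le> sum_list cJ"
      using length_le_sum_list[OF sub[OF sets(1)]] length_le_sum_list[OF sub[OF sets(2)]]
        length_le_sum_list[OF sub[OF sets(3)]] length_le_sum_list[OF sub[OF sets(4)]] len(1)
      by (auto simp: k_def i_def j_def)
  qed
  hence ki: "k + i \<le> s" and kj: "k + j \<le> s" using sums by auto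
  have zpos: "(1::nat) \<le> z" using z by simp
  have target_pos: "0 \<le> real z powr (-1 / real s) * ln (real z)" using lnz by simp
  have A_nonneg: "\<And>LK. 0 \<le> (if dotp aK LK \<le> z then V s N aI (z - dotp aK LK) else 0)" by simp
  have B_nonneg: "\<And>LK. 0 \<le> (if dotp cK LK \<le> z' then V s N cJ (z' - dotp cK LK) else 0)" by simp
  consider (A) "k + i < s" | (Bc) "k + j < s" | (C) "k + i = s" "k + j = s" using ki kj by linarith
  then show ?thesis
  proof cases
    case A
    have S1: "SQ s N z z' aK aI cK cJ \<le> B * V s N (aK @ aI) z"
    proof -
      have "SQ s N z z' aK aI cK cJ \<le> (\<Sum>LK\<in>LL (length aK) N. pl s LK *
        (if dotp aK LK \<le> z then V s N aI (z - dotp aK LK) else 0) * B)"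
        unfolding SQ_eq
      proof (intro sum_mono mult_left_mono)
        fix LK show "(if dotp cK LK \<le> z' then V s N cJ (z' - dotp cK LK) else 0) \<le> B"
          using V_uniform[OF s sets(4), of N] kj B1 by (auto simp: B_def j_def)
      qed (auto intro: mult_nonneg_nonneg)
      also have "\<dots> = B * V s N (aK @ aI) z"
        unfolding V_append sum_distrib_left by (intro sum.cong refl) (simp only: mult_ac)
      finally show ?thesis .
    qed
    have V1: "V s N (aK @ aI) z \<le> B * real z powr (-1 / real s)"
    proof -
      have "V s N (aK @ aI) z \<le> B * real z powr (real (k + i) / real s - 1)"
        using V_bound'[OF s, of "aK @ aI" z N] sets len ki zpos by (auto simp: k_def i_def B_def)
      also have "real z powr (real (k + i) / real s - 1) \<le> real z powr (-1 / real s)"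
      proof (intro exp_le_target)
        have "real (k + i) \<le> real s - 1" using A by linarith
        then show "real (k + i) / real s - 1 \<le> -1 / real s" using s by (intro frac_le) auto
      qed (use zpos in auto)
      then have "B * real z powr (real (k + i) / real s - 1) \<le> B * real z powr (-1 / real s)"
        using B1 by (intro mult_left_mono) auto
      finally show ?thesis .
    qed
    have "SQ s N z z' aK aI cK cJ \<le> B * (B * real z powr (-1 / real s))"
      using S1 mult_left_mono[OF V1, of B] B1 by linarith
    then show ?thesis using final_arith[OF B1 lnz, of "real z powr (-1 / real s)"] K0 by simp
  next
    case Bc
    have S1: "SQ s N z z' aK aI cK cJ \<le> B * V s N (cK @ cJ) z'"
    proof -
      have "SQ s N z z' aK aI cK cJ \<le> (\<Sum>LK\<in>LL (length aK) N. pl s LK * B *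
        (if dotp cK LK \<le> z' then V s N cJ (z' - dotp cK LK) else 0))"
        unfolding SQ_eq
      proof (intro sum_mono mult_right_mono mult_left_mono)
        fix LK show "(if dotp aK LK \<le> z then V s N aI (z - dotp aK LK) else 0) \<le> B"
          using V_uniform[OF s sets(2), of N] ki B1 by (auto simp: B_def i_def)
      qed auto
      also have "\<dots> = B * V s N (cK @ cJ) z'"
        unfolding V_append sum_distrib_left len(1) by (intro sum.cong refl) (simp only: mult_ac)
      finally show ?thesis .
    qed
    have V1: "V s N (cK @ cJ) z' \<le> B * real z powr (-1 / real s)"
    proof -
      have P1: "real z' powr (real (k + j) / real s - 1) \<le> real z powr (real (k + j) / real s - 1)"
      proof (intro powr_mono2')
        have "real (k + j) \<le> real s" using kj by linarith
        then show "real (k + j) / real s - 1 \<le> 0" using s by (simp add: divide_le_eq)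
      qed (use z in auto)
      have P2: "real z powr (real (k + j) / real s - 1) \<le> real z powr (-1 / real s)"
      proof (intro exp_le_target)
        have "real (k + j) \<le> real s - 1" using Bc by linarith
        then show "real (k + j) / real s - 1 \<le> -1 / real s" using s by (intro frac_le) auto
      qed (use zpos in auto)
      have "cK \<noteq> []" using len by auto
      then have "V s N (cK @ cJ) z' \<le> B * real z' powr (real (k + j) / real s - 1)"
        using V_bound'[OF s, of "cK @ cJ" z' N] sets len kj zpos z by (auto simp: k_def j_def B_def)
      also have "\<dots> \<le> B * real z powr (-1 / real s)"
        using B1 P1 P2 by (intro mult_left_mono) auto
      finally show ?thesis .
    qed
    have "SQ s N z z' aK aI cK cJ \<le> B * (B * real z powr (-1 / real s))"
      using S1 mult_left_mono[OF V1, of B] B1 by linarith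
    then show ?thesis using final_arith[OF B1 lnz, of "real z powr (-1 / real s)"] K0 by simp
  next
    case C
    define r where "r = s - k"
    have ir: "i = r" "j = r" using C by (auto simp: r_def)
    have r1: "r \<ge> 1" using len ir by (cases aI; cases cJ) (auto simp: i_def j_def)
    have kr: "k + r = s" using C by (simp add: r_def)
    have aIne: "aI \<noteq> []" and cJne: "cJ \<noteq> []" using r1 ir by (auto simp: i_def j_def)
    have sub: "set xs \<subseteq> {1..s} \<Longrightarrow> set xs \<subseteq> {1..}" for xs :: "nat list" by auto
    have "sum_list aK = k"
      using length_le_sum_list[OF sub[OF sets(1)]] length_le_sum_list[OF sub[OF sets(2)]] sums C
      by (simp add: k_def i_def)
    then have aK1: "aK = replicate k 1" using sum_list_eq_length[OF sub[OF sets(1)]] by (simp add: k_def)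
    have "sum_list cK = k"
      using length_le_sum_list[OF sub[OF sets(3)]] length_le_sum_list[OF sub[OF sets(4)]] sums C len(1)
      by (simp add: k_def j_def)
    then have cK1: "cK = replicate k 1" using sum_list_eq_length[OF sub[OF sets(3)]] len(1) by (simp add: k_def)
    have acK: "cK = aK" using aK1 cK1 by simp
    define e where "e = real r / real s - 1"
    have e0: "e \<le> 0" using kr by (simp add: e_def divide_le_eq)
    define G where "G m = B^2 * real (z - m) powr (2 * e)" for m
    have lenI: "length aI = r" and lenJ: "length cJ = r" using ir by (auto simp: i_def j_def)
    have VI: "V s N aI v \<le> B * real v powr e" if "v \<ge> 1" for v
      using V_bound'[OF s sets(2) aIne, of v N] that lenI kr by (auto simp: B_def e_def)
    have VJ: "V s N cJ v \<le> B * real v powr e" if "v \<ge> 1" for v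
      using V_bound'[OF s sets(4) cJne, of v N] that lenJ kr by (auto simp: B_def e_def)
    have "SQ s N z z' aK aI cK cJ \<le> (\<Sum>LK\<in>LL (length aK) N. pl s LK * (if dotp aK LK < z then G (dotp aK LK) else 0))"
      unfolding SQ_eq acK
    proof (intro sum_mono)
      fix LK
      define d where "d = dotp aK LK"
      have "(if d \<le> z then V s N aI (z - d) else 0) * (if d \<le> z' then V s N cJ (z' - d) else 0)
            \<le> (if d < z then G d else 0)"
      proof (cases "d < z")
        case True
        have v1: "V s N aI (z - d) \<le> B * real (z - d) powr e" using True by (intro VI) simp
        have "V s N cJ (z' - d) \<le> B * real (z' - d) powr e" using True z by (intro VJ) simp
        also have "\<dots> \<le> B * real (z - d) powr e" using e0 True z B1 by (intro mult_left_mono powr_mono2') auto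
        finally have v2: "V s N cJ (z' - d) \<le> B * real (z - d) powr e" .
        have "V s N aI (z - d) * V s N cJ (z' - d) \<le> (B * real (z - d) powr e) * (B * real (z - d) powr e)"
          using v1 v2 B1 by (intro mult_mono) auto
        also have "\<dots> = G d" by (simp add: G_def power2_eq_square powr_add[symmetric] mult_ac)
        finally show ?thesis using True z by auto
      next
        case False
        show ?thesis
        proof (cases "d = z")
          case True
          have "V s N aI 0 = 0" using V_zero[OF aIne sub[OF sets(2)]] .
          then show ?thesis using True by simp
        qed (use False in auto)
      qed
      then show "pl s LK * (if dotp aK LK \<le> z then V s N aI (z - dotp aK LK) else 0) *
           (if dotp aK LK \<le> z' then V s N cJ (z' - dotp aK LK) else 0)
           \<le> pl s LK * (if dotp aK LK < z then G (dotp aK LK) else 0)"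
        unfolding d_def by (simp only: mult.assoc) (intro mult_left_mono, auto)
    qed
    also have "\<dots> = (\<Sum>m<z. V s N aK m * G m)" by (rule V_sum_K)
    also have "\<dots> = (\<Sum>m\<in>{1..<z}. V s N aK m * G m)"
    proof -
      have "{..<z} = insert 0 {1..<z}" using z by auto
      moreover have "V s N aK 0 = 0" using V_zero[OF len(2) sub[OF sets(1)]] .
      ultimately show ?thesis by simp
    qed
    also have "\<dots> \<le> (\<Sum>m\<in>{1..<z}. B^3 * (real m powr (real k / real s - 1) * real (z - m) powr (2 * (real r / real s - 1))))"
    proof (intro sum_mono)
      fix m assume m: "m \<in> {1..<z}"
      have "V s N aK m \<le> B * real m powr (real k / real s - 1)"
        using V_bound'[OF s sets(1) len(2), of m N] m k1 kr by (auto simp: B_def k_def)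
      then have "V s N aK m * G m \<le> (B * real m powr (real k / real s - 1)) * G m"
        by (intro mult_right_mono) (auto simp: G_def)
      also have "\<dots> = B^3 * (real m powr (real k / real s - 1) * real (z - m) powr (2 * (real r / real s - 1)))"
        by (simp add: G_def e_def power2_eq_square power3_eq_cube mult_ac)
      finally show "V s N aK m * G m \<le> \<dots>" .
    qed
    also have "\<dots> = B^3 * (\<Sum>m\<in>{1..<z}. real m powr (real k / real s - 1) * real (z - m) powr (2 * (real r / real s - 1)))"
      by (simp add: sum_distrib_left)
    also have "\<dots> \<le> B^3 * (16 * (1 + ln (real z)) * real z powr (-1 / real s))"
      using caseC_sum[OF s k1 r1 kr zpos] B1 by (intro mult_left_mono) auto
    also have "\<dots> \<le> (32 * B^3) * real z powr (-1 / real s) * ln (real z)"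
    proof -
      have "16 * (1 + ln (real z)) \<le> 32 * ln (real z)" using lnz by simp
      then have "16 * (1 + ln (real z)) * real z powr (-1 / real s) \<le> 32 * ln (real z) * real z powr (-1 / real s)"
        by (intro mult_right_mono) auto
      then have "B^3 * (16 * (1 + ln (real z)) * real z powr (-1 / real s)) \<le> B^3 * (32 * ln (real z) * real z powr (-1 / real s))"
        using B1 by (intro mult_left_mono) auto
      then show ?thesis by (simp add: mult_ac)
    qed
    finally show ?thesis using K0 by simp
  qed
qed



lemma pr_in_le1: "s \<ge> 1 \<Longrightarrow> pr_in s n \<le> 1"
proof (cases "n = 0")
  case True then show ?thesis by (simp add: pr_in_def)
next
  case False
  assume s: "s \<ge> 1"
  have "real n powr (-1 + 1 / real s) \<le> real n powr 0"
    using False s by (intro powr_mono) auto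
  then have "real n powr (-1 + 1 / real s) \<le> 1" using False by simp
  moreover have "1 / real s \<le> 1" using s by simp
  ultimately have "1 / real s * real n powr (-1 + 1 / real s) \<le> 1 * 1"
    by (intro mult_mono) auto
  then show ?thesis by (simp add: pr_in_def)
qed

lemma measure_E:
  assumes s: "s \<ge> 1" and F: "finite F"
  shows "measure (rand_set s) (E_ev s F) = (\<Prod>n\<in>F. pr_in s n)"
proof -
  interpret P: product_prob_space "\<lambda>n. measure_pmf (bernoulli_pmf (pr_in s n))" UNIV
    by unfold_locales (auto intro: prob_space_measure_pmf)
  have eq: "E_ev s F = {x\<in>space (rand_set s). \<forall>i\<in>F. x i \<in> {True}}"
    by (auto simp: E_ev_def)
  have "emeasure (rand_set s) {x\<in>space (rand_set s). \<forall>i\<in>F. x i \<in> {True}} = (\<Prod>i\<in>F. emeasure (measure_pmf (bernoulli_pmf (pr_in s i))) {True})"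
    unfolding rand_set_def using F by (intro P.emeasure_PiM_Collect) auto
  then have "emeasure (rand_set s) (E_ev s F) = (\<Prod>i\<in>F. emeasure (measure_pmf (bernoulli_pmf (pr_in s i))) {True})"
    unfolding eq .
  also have "\<dots> = (\<Prod>i\<in>F. ennreal (pr_in s i))"
    using pr_in_le1[OF s] by (intro prod.cong refl) (simp add: emeasure_pmf_single pr_in_def)
  also have "\<dots> = ennreal (\<Prod>i\<in>F. pr_in s i)"
    by (rule prod_ennreal) (simp add: pr_in_def)
  finally have "emeasure (rand_set s) (E_ev s F) = ennreal (\<Prod>i\<in>F. pr_in s i)" .
  then show ?thesis
    by (simp add: measure_def prod_nonneg pr_in_def)
qed

lemma E_Int: "E_ev s A \<inter> E_ev s B = E_ev s (A \<union> B)"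
  by (auto simp: E_ev_def)



definition wit :: "nat \<Rightarrow> nat set \<Rightarrow> nat \<Rightarrow> nat \<Rightarrow> nat" where
  "wit s \<omega> z = (SOME a. (\<forall>x\<in>\<omega>. a x \<ge> 1) \<and> (\<Sum>x\<in>\<omega>. a x) = s \<and> z = (\<Sum>x\<in>\<omega>. a x * x))"

lemma wit_spec:
  assumes "\<omega> \<in> Omega s z"
  shows "(\<forall>x\<in>\<omega>. wit s \<omega> z x \<ge> 1) \<and> (\<Sum>x\<in>\<omega>. wit s \<omega> z x) = s \<and> z = (\<Sum>x\<in>\<omega>. wit s \<omega> z x * x)"
proof -
  from assms obtain a where "(\<forall>x\<in>\<omega>. a x \<ge> 1) \<and> (\<Sum>x\<in>\<omega>. a x) = s \<and> z = (\<Sum>x\<in>\<omega>. a x * x)"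
    by (auto simp: Omega_def sigma_set_def)
  then show ?thesis unfolding wit_def
    by (rule someI[of "\<lambda>a. (\<forall>x\<in>\<omega>. a x \<ge> 1) \<and> (\<Sum>x\<in>\<omega>. a x) = s \<and> z = (\<Sum>x\<in>\<omega>. a x * x)"])
qed

lemma Omega_finite: "\<omega> \<in> Omega s z \<Longrightarrow> finite \<omega>" by (simp add: Omega_def)

lemma wit_le:
  assumes "\<omega> \<in> Omega s z" "x \<in> \<omega>"
  shows "wit s \<omega> z x \<le> s"
proof -
  have "wit s \<omega> z x \<le> (\<Sum>y\<in>\<omega>. wit s \<omega> z y)"
    using assms Omega_finite by (intro member_le_sum) auto
  then show ?thesis using wit_spec[OF assms(1)] by simp
qed

lemma Omega_elem:
  assumes "\<omega> \<in> Omega s z" "x \<in> \<omega>"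
  shows "1 \<le> x \<and> x \<le> z"
proof
  show "1 \<le> x" using assms by (cases x) (auto simp: Omega_def)
  have w: "1 \<le> wit s \<omega> z x" using wit_spec[OF assms(1)] assms(2) by auto
  have "x \<le> wit s \<omega> z x * x" using w by simp
  also have "\<dots> \<le> (\<Sum>y\<in>\<omega>. wit s \<omega> z y * y)"
    using assms Omega_finite by (intro member_le_sum) auto
  finally show "x \<le> z" using wit_spec[OF assms(1)] by simp
qed

lemma dotp_map: "dotp (map a L) L = sum_list (map (\<lambda>x. a x * x) L)"
  by (induction L) auto

definition QS :: "nat \<Rightarrow> (nat list \<times> nat list \<times> nat list \<times> nat list) set" where
  "QS s = {(aK,aI,cK,cJ). set aK \<subseteq> {1..s} \<and> set aI \<subseteq> {1..s} \<and> set cK \<subseteq> {1..s} \<and> set cJ \<subseteq> {1..s}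
     \<and> length cK = length aK \<and> aK \<noteq> [] \<and> (aI \<noteq> [] \<or> cJ \<noteq> [])
     \<and> sum_list aK + sum_list aI = s \<and> sum_list cK + sum_list cJ = s}"

lemma finite_QS: "finite (QS s)"
proof -
  define LS where "LS = {xs. set xs \<subseteq> {1..s} \<and> length xs \<le> s}"
  have fLS: "finite LS" unfolding LS_def by (rule finite_lists_length_le) simp
  have sub: "set xs \<subseteq> {1..s} \<Longrightarrow> set xs \<subseteq> {1..}" for xs :: "nat list" by auto
  have "QS s \<subseteq> LS \<times> LS \<times> LS \<times> LS"
  proof
    fix q assume q: "q \<in> QS s"
    obtain aK aI cK cJ where qq: "q = (aK,aI,cK,cJ)" by (cases q) auto
    with q have h: "set aK \<subseteq> {1..s}" "set aI \<subseteq> {1..s}" "set cK \<subseteq> {1..s}" "set cJ \<subseteq> {1..s}"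
      "sum_list aK + sum_list aI = s" "sum_list cK + sum_list cJ = s" by (auto simp: QS_def)
    have "length aK \<le> s" "length aI \<le> s" "length cK \<le> s" "length cJ \<le> s"
      using length_le_sum_list[OF sub[OF h(1)]] length_le_sum_list[OF sub[OF h(2)]]
        length_le_sum_list[OF sub[OF h(3)]] length_le_sum_list[OF sub[OF h(4)]] h(5,6) by auto
    then show "q \<in> LS \<times> LS \<times> LS \<times> LS" using qq h by (auto simp: LS_def)
  qed
  then show ?thesis by (rule finite_subset) (simp add: fLS)
qed

definition TT :: "nat \<Rightarrow> nat \<Rightarrow> ((nat list \<times> nat list \<times> nat list \<times> nat list) \<times> (nat list \<times> nat list \<times> nat list)) set" where
  "TT s N = Sigma (QS s) (\<lambda>(aK,aI,cK,cJ). LL (length aK) N \<times> LL (length aI) N \<times> LL (length cJ) N)"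

definition FF :: "nat \<Rightarrow> nat \<Rightarrow> nat \<Rightarrow> (nat list \<times> nat list \<times> nat list \<times> nat list) \<Rightarrow> (nat list \<times> nat list \<times> nat list) \<Rightarrow> real" where
  "FF s z z' Q t = (case Q of (aK,aI,cK,cJ) \<Rightarrow> case t of (LK,LI,LJ) \<Rightarrow>
     if dotp aK LK + dotp aI LI = z \<and> dotp cK LK + dotp cJ LJ = z' then pl s LK * pl s LI * pl s LJ else 0)"

lemma FF_nonneg: "0 \<le> FF s z z' Q t"
  by (auto simp: FF_def split: prod.splits)

lemma finite_TT: "finite (TT s N)"
  unfolding TT_def using finite_QS by (intro finite_SigmaI) (auto split: prod.splits)

lemma sum_TT: "(\<Sum>p\<in>TT s N. case p of (Q, t) \<Rightarrow> FF s z z' Q t) =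
   (\<Sum>Q\<in>QS s. case Q of (aK,aI,cK,cJ) \<Rightarrow> SQ s N z z' aK aI cK cJ)"
proof -
  have "(\<Sum>p\<in>TT s N. case p of (Q, t) \<Rightarrow> FF s z z' Q t) =
        (\<Sum>Q\<in>QS s. \<Sum>t\<in>(case Q of (aK,aI,cK,cJ) \<Rightarrow> LL (length aK) N \<times> LL (length aI) N \<times> LL (length cJ) N). FF s z z' Q t)"
    unfolding TT_def using finite_QS by (subst sum.Sigma) (auto split: prod.splits)
  also have "\<dots> = (\<Sum>Q\<in>QS s. case Q of (aK,aI,cK,cJ) \<Rightarrow> SQ s N z z' aK aI cK cJ)"
  proof (intro sum.cong refl)
    fix Q :: "nat list \<times> nat list \<times> nat list \<times> nat list"
    obtain aK aI cK cJ where Q: "Q = (aK,aI,cK,cJ)" by (cases Q) auto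
    show "(\<Sum>t\<in>(case Q of (aK,aI,cK,cJ) \<Rightarrow> LL (length aK) N \<times> LL (length aI) N \<times> LL (length cJ) N). FF s z z' Q t)
        = (case Q of (aK,aI,cK,cJ) \<Rightarrow> SQ s N z z' aK aI cK cJ)"
      unfolding Q SQ_def FF_def by (simp add: sum.cartesian_product)
  qed
  finally show ?thesis .
qed

definition hh :: "nat \<Rightarrow> nat \<Rightarrow> nat \<Rightarrow> nat set \<times> nat set \<Rightarrow> (nat list \<times> nat list \<times> nat list \<times> nat list) \<times> (nat list \<times> nat list \<times> nat list)" where
  "hh s z z' p = (case p of (\<omega>, \<omega>') \<Rightarrow>
     ((map (wit s \<omega> z) (sorted_list_of_set (\<omega> \<inter> \<omega>')), map (wit s \<omega> z) (sorted_list_of_set (\<omega> - \<omega>')),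
       map (wit s \<omega>' z') (sorted_list_of_set (\<omega> \<inter> \<omega>')), map (wit s \<omega>' z') (sorted_list_of_set (\<omega>' - \<omega>))),
      (sorted_list_of_set (\<omega> \<inter> \<omega>'), sorted_list_of_set (\<omega> - \<omega>'), sorted_list_of_set (\<omega>' - \<omega>))))"

definition PP :: "nat \<Rightarrow> nat \<Rightarrow> nat \<Rightarrow> (nat set \<times> nat set) set" where
  "PP s z z' = {(\<omega>, \<omega>'). \<omega> \<in> Omega s z \<and> \<omega>' \<in> Omega s z' \<and> rel_sim \<omega> \<omega>'}"

lemma hh_inj: "inj_on (hh s z z') (PP s z z')"
proof (rule inj_onI)
  fix p q assume p: "p \<in> PP s z z'" and q: "q \<in> PP s z z'" and e: "hh s z z' p = hh s z z' q"
  obtain \<omega>1 \<omega>1' where p': "p = (\<omega>1, \<omega>1')" by (cases p) auto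
  obtain \<omega>2 \<omega>2' where q': "q = (\<omega>2, \<omega>2')" by (cases q) auto
  have f: "finite \<omega>1" "finite \<omega>1'" "finite \<omega>2" "finite \<omega>2'"
    using p q p' q' by (auto simp: PP_def Omega_def)
  from e have "sorted_list_of_set (\<omega>1 \<inter> \<omega>1') = sorted_list_of_set (\<omega>2 \<inter> \<omega>2')"
    "sorted_list_of_set (\<omega>1 - \<omega>1') = sorted_list_of_set (\<omega>2 - \<omega>2')"
    "sorted_list_of_set (\<omega>1' - \<omega>1) = sorted_list_of_set (\<omega>2' - \<omega>2)"
    by (auto simp: hh_def p' q')
  then have "\<omega>1 \<inter> \<omega>1' = \<omega>2 \<inter> \<omega>2'" "\<omega>1 - \<omega>1' = \<omega>2 - \<omega>2'" "\<omega>1' - \<omega>1 = \<omega>2' - \<omega>2"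
    using f by (metis finite_Diff finite_Int sorted_list_of_set.set_sorted_key_list_of_set)+
  then have "\<omega>1 = \<omega>2" "\<omega>1' = \<omega>2'" by blast+
  then show "p = q" using p' q' by simp
qed

lemma sum_sl: "finite A \<Longrightarrow> sum_list (map f (sorted_list_of_set A)) = sum f A"
  by (simp add: sum_list_distinct_conv_sum_set)

lemma pl_sl: "finite A \<Longrightarrow> pl s (sorted_list_of_set A) = (\<Prod>n\<in>A. pr_in s n)"
  unfolding pl_def using prod.distinct_set_conv_list[of "sorted_list_of_set A" "pr_in s"] by simp

lemma hh_props:
  assumes s: "s \<ge> 1" and p: "(\<omega>, \<omega>') \<in> PP s z z'" and zz: "z \<le> z'"
  shows "hh s z z' (\<omega>, \<omega>') \<in> TT s z'"
    and "(case hh s z z' (\<omega>, \<omega>') of (Q, t) \<Rightarrow> FF s z z' Q t) = measure (rand_set s) (E_ev s \<omega> \<inter> E_ev s \<omega>')"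
proof -
  have o: "\<omega> \<in> Omega s z" and o': "\<omega>' \<in> Omega s z'" and rs: "rel_sim \<omega> \<omega>'" using p by (auto simp: PP_def)
  have f: "finite \<omega>" "finite \<omega>'" using o o' by (auto simp: Omega_def)
  define a where "a = wit s \<omega> z"
  define c where "c = wit s \<omega>' z'"
  define K where "K = \<omega> \<inter> \<omega>'"
  define I where "I = \<omega> - \<omega>'"
  define J where "J = \<omega>' - \<omega>"
  have fKIJ: "finite K" "finite I" "finite J" using f by (auto simp: K_def I_def J_def)
  have hh_eq: "hh s z z' (\<omega>, \<omega>') = ((map a (sorted_list_of_set K), map a (sorted_list_of_set I),
       map c (sorted_list_of_set K), map c (sorted_list_of_set J)),
      (sorted_list_of_set K, sorted_list_of_set I, sorted_list_of_set J))"
    by (simp add: hh_def a_def c_def K_def I_def J_def)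
  have wa: "\<forall>x\<in>\<omega>. 1 \<le> a x" "(\<Sum>x\<in>\<omega>. a x) = s" "z = (\<Sum>x\<in>\<omega>. a x * x)"
    using wit_spec[OF o] by (auto simp: a_def)
  have wc: "\<forall>x\<in>\<omega>'. 1 \<le> c x" "(\<Sum>x\<in>\<omega>'. c x) = s" "z' = (\<Sum>x\<in>\<omega>'. c x * x)"
    using wit_spec[OF o'] by (auto simp: c_def)
  have al: "x \<in> \<omega> \<Longrightarrow> a x \<le> s" for x using wit_le[OF o] by (simp add: a_def)
  have cl: "x \<in> \<omega>' \<Longrightarrow> c x \<le> s" for x using wit_le[OF o'] by (simp add: c_def)
  have Kne: "K \<noteq> {}" using rs by (simp add: rel_sim_def K_def)
  have IJne: "I \<noteq> {} \<or> J \<noteq> {}" using rs by (auto simp: rel_sim_def I_def J_def)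
  have om: "\<omega> = K \<union> I" "\<omega>' = K \<union> J" "K \<inter> I = {}" "K \<inter> J = {}" "I \<inter> J = {}"
    by (auto simp: K_def I_def J_def)
  have sumsplit: "(\<Sum>x\<in>\<omega>. g x) = (\<Sum>x\<in>K. g x) + (\<Sum>x\<in>I. g x)" "(\<Sum>x\<in>\<omega>'. g x) = (\<Sum>x\<in>K. g x) + (\<Sum>x\<in>J. g x)"
    for g :: "nat \<Rightarrow> nat"
    using fKIJ om by (simp_all add: sum.union_disjoint)
  have elems: "x \<in> \<omega> \<union> \<omega>' \<Longrightarrow> 1 \<le> x \<and> x \<le> z'" for x
    using Omega_elem[OF o, of x] Omega_elem[OF o', of x] zz by auto
  show "hh s z z' (\<omega>, \<omega>') \<in> TT s z'"
  proof -
    have Q: "(map a (sorted_list_of_set K), map a (sorted_list_of_set I),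
       map c (sorted_list_of_set K), map c (sorted_list_of_set J)) \<in> QS s"
      unfolding QS_def using fKIJ Kne IJne wa wc al cl
      by (auto simp: sum_sl sumsplit om(1,2)[symmetric] K_def I_def J_def)
    have L: "sorted_list_of_set X \<in> LL (card X) z'" if "X \<subseteq> \<omega> \<union> \<omega>'" for X
    proof -
      have "finite X" using that f by (meson finite_UnI finite_subset)
      then show ?thesis using that elems by (auto simp: LL_def)
    qed
    show ?thesis unfolding hh_eq TT_def using Q L[of K] L[of I] L[of J] fKIJ
      by (auto simp: K_def I_def J_def)
  qed
  show "(case hh s z z' (\<omega>, \<omega>') of (Q, t) \<Rightarrow> FF s z z' Q t) = measure (rand_set s) (E_ev s \<omega> \<inter> E_ev s \<omega>')"
  proof -
    have d1: "dotp (map g (sorted_list_of_set X)) (sorted_list_of_set X) = (\<Sum>x\<in>X. g x * x)" if "finite X" for g X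
      using that by (simp add: dotp_map sum_sl)
    have cond: "dotp (map a (sorted_list_of_set K)) (sorted_list_of_set K) + dotp (map a (sorted_list_of_set I)) (sorted_list_of_set I) = z"
      "dotp (map c (sorted_list_of_set K)) (sorted_list_of_set K) + dotp (map c (sorted_list_of_set J)) (sorted_list_of_set J) = z'"
      using fKIJ wa wc by (simp_all add: d1 sumsplit)
    have "measure (rand_set s) (E_ev s \<omega> \<inter> E_ev s \<omega>') = (\<Prod>n\<in>\<omega> \<union> \<omega>'. pr_in s n)"
      using f s by (simp add: E_Int measure_E)
    also have "\<omega> \<union> \<omega>' = K \<union> (I \<union> J)" using om by auto
    also have "(\<Prod>n\<in>K \<union> (I \<union> J). pr_in s n) = (\<Prod>n\<in>K. pr_in s n) * ((\<Prod>n\<in>I. pr_in s n) * (\<Prod>n\<in>J. pr_in s n))"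
      using fKIJ om by (simp add: prod.union_disjoint Int_Un_distrib)
    finally show ?thesis unfolding hh_eq FF_def using cond fKIJ by (simp add: pl_sl mult_ac)
  qed
qed



theorem lemma3:
  fixes s :: nat
  assumes "s \<ge> 2"
  shows "\<exists>C>0. \<exists>Z::nat. \<forall>z z' :: nat. Z \<le> z \<longrightarrow> z \<le> z' \<longrightarrow>
    (\<Sum>(\<omega>, \<omega>') \<in> {(\<omega>, \<omega>'). \<omega> \<in> Omega s z \<and> \<omega>' \<in> Omega s z' \<and> rel_sim \<omega> \<omega>'}.
        measure (rand_set s) (E_ev s \<omega> \<inter> E_ev s \<omega>'))
      \<le> C * real z powr (-1 / real s) * ln (real z)"
proof -
  have s: "s \<ge> 2" by fact
  define K0 where "K0 = 32 * (4 * real s) ^ (3 * s)"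
  define C where "C = (real (card (QS s)) + 1) * K0"
  have K0pos: "0 < K0" using s by (simp add: K0_def)
  have Cpos: "0 < C" using K0pos by (simp add: C_def)
  have main: "(\<Sum>(\<omega>, \<omega>') \<in> {(\<omega>, \<omega>'). \<omega> \<in> Omega s z \<and> \<omega>' \<in> Omega s z' \<and> rel_sim \<omega> \<omega>'}.
        measure (rand_set s) (E_ev s \<omega> \<inter> E_ev s \<omega>'))
      \<le> C * real z powr (-1 / real s) * ln (real z)" if z: "3 \<le> z" "z \<le> z'" for z z'
  proof -
    define t where "t = real z powr (-1 / real s) * ln (real z)"
    have t0: "0 \<le> t" using z by (simp add: t_def)
    have "(\<Sum>(\<omega>, \<omega>') \<in> {(\<omega>, \<omega>'). \<omega> \<in> Omega s z \<and> \<omega>' \<in> Omega s z' \<and> rel_sim \<omega> \<omega>'}.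
        measure (rand_set s) (E_ev s \<omega> \<inter> E_ev s \<omega>'))
       = (\<Sum>p\<in>PP s z z'. case hh s z z' p of (Q, t) \<Rightarrow> FF s z z' Q t)"
      unfolding PP_def[symmetric]
    proof (intro sum.cong refl)
      fix p assume p: "p \<in> PP s z z'"
      obtain \<omega> \<omega>' where pp: "p = (\<omega>, \<omega>')" by (cases p) auto
      show "(case p of (\<omega>, \<omega>') \<Rightarrow> measure (rand_set s) (E_ev s \<omega> \<inter> E_ev s \<omega>')) =
            (case hh s z z' p of (Q, t) \<Rightarrow> FF s z z' Q t)"
        using hh_props(2)[of s \<omega> \<omega>' z z'] p pp s z by auto
    qed
    also have "\<dots> = (\<Sum>q\<in>hh s z z' ` PP s z z'. case q of (Q, t) \<Rightarrow> FF s z z' Q t)"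
      by (rule sum.reindex[OF hh_inj, symmetric, unfolded comp_def])
    also have "\<dots> \<le> (\<Sum>q\<in>TT s z'. case q of (Q, t) \<Rightarrow> FF s z z' Q t)"
    proof (intro sum_mono2 finite_TT)
      show "hh s z z' ` PP s z z' \<subseteq> TT s z'"
        using hh_props(1)[of s _ _ z z'] s z by (auto simp: PP_def[symmetric])
    qed (auto simp: FF_nonneg split: prod.splits)
    also have "\<dots> = (\<Sum>Q\<in>QS s. case Q of (aK,aI,cK,cJ) \<Rightarrow> SQ s z' z z' aK aI cK cJ)"
      by (rule sum_TT)
    also have "\<dots> \<le> (\<Sum>Q\<in>QS s. K0 * t)"
    proof (intro sum_mono)
      fix Q assume Q: "Q \<in> QS s"
      obtain aK aI cK cJ where QQ: "Q = (aK,aI,cK,cJ)" by (cases Q) auto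
      show "(case Q of (aK,aI,cK,cJ) \<Rightarrow> SQ s z' z z' aK aI cK cJ) \<le> K0 * t"
        using SQ_bound[OF s, of aK aI cK cJ z z' z'] Q QQ z by (auto simp: QS_def K0_def t_def mult_ac)
    qed
    also have "\<dots> = real (card (QS s)) * K0 * t" by simp
    also have "\<dots> \<le> C * t" unfolding C_def using K0pos t0 by (intro mult_right_mono) auto
    finally show ?thesis by (simp add: t_def mult_ac)
  qed
  show ?thesis
    by (rule exI[of _ C], rule conjI[OF Cpos], rule exI[of _ 3]) (use main in blast)
qed


end
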